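(* Let $(G,r)$ be a symmetric group with $|G|\ge2$, $(G,+,\cdot)$ its associated left brace, and $\{1\}=K_0\subseteq K_1\subseteq\cdots$ its derived chain of ideals. (1) For all integers $j,s$ with $1\le s\le j$: $((\cdots((K_j*G)*G)*\cdots)*G)\subseteq K_{j-s}$, where $*G$ is applied $s$ times. (2) For an integer $m\ge1$ the following are equivalent: (a) $(G,r)$ has finite multipermutation level $\mathrm{mpl}(G,r)=m$; (b) the derived chain has the form $\{1\}=K_0\subsetneq K_1\subsetneq\cdots\subsetneq K_{m-1}\subsetneq K_m=G$; (c) $G^{(j+1)}\subseteq K_{m-j}$ for $0\le j\le m$, and $G^{(j+1)}\not\subseteq K_{m-j-1}$ for $0\le j\le m-1$; (d) $G^{(m+1)}=0$ and $G^{(m)}\neq0$ (i.e. the brace is right nilpotent of class $m+1$).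
   Context: A symmetric group is a pair $(G,r)$, $G$ a group, $r(u,v)=({}^uv,u^v)$ an involutive bijection of $G\times G$ with ${}^a1=1,{}^1u=u,1^u=1,a^1=a$, ${}^{ab}u={}^a({}^bu)$, $a^{uv}=(a^u)^v$, ${}^a(uv)=({}^au)({}^{a^u}v)$, $(ab)^u=(a^{{}^bu})(b^u)$, $uv=({}^uv)(u^v)$; it is a non-degenerate symmetric set. Its associated left brace is $(G,+,\cdot)$ with $a+b:=a({}^{a^{-1}}b)$; then ${}^ab=ab-a$ and $0=1$. Define $a*b:=ab-a-b$; for subsets $A,B$, $A*B$ is the additive subgroup generated by $\{a*b:a\in A,b\in B\}$; $G^{(1)}=G$, $G^{(s+1)}=G^{(s)}*G$. An ideal is a normal subgroup $H$ with ${}^aH\subseteq H$ for all $a$; $G/H$ then inherits a symmetric group structure. The socle is $\mathrm{soc}(G)=\{a:{}^au=u\ \forall u\in G\}$, an ideal with $G/\mathrm{soc}(G)\cong\mathrm{Ret}(G,r)$. Put $G^0=G$, $G^j=G^{j-1}/\mathrm{soc}(G^{j-1})$ with canonical maps $\varphi_j:G^{j-1}\to G^j$, $K_0=\{1\}$, $K_1=\mathrm{soc}(G)$, $K_j=(\varphi_{j-1}\circ\cdots\circ\varphi_1)^{-1}(\mathrm{soc}(G^{j-1}))$ for $j>1$ (the derived chain of ideals). The retraction of a non-degenerate symmetric set $(X,r)$ is $X/\!\sim$ ($x\sim y$ iff ${}^xz={}^yz$ for all $z$) with the induced map; $\mathrm{mpl}(X,r)=m$ means $m$ is minimal such that the $m$-fold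 iterated retraction is a one-element set. *)

theory Defs
  imports "HOL-Algebra.Generated_Groups"
begin

text \<open>A symmetric group (G,r): G a group (HOL-Algebra, relativised to carrier G),
  r(u,v) = (lam u v, rho u v), i.e. lam u v is the left action of u on v and rho u v the right action of v on u.\<close>

definition symmetric_group ::
  "('a,'b) monoid_scheme \<Rightarrow> ('a \<Rightarrow> 'a \<Rightarrow> 'a) \<Rightarrow> ('a \<Rightarrow> 'a \<Rightarrow> 'a) \<Rightarrow> bool" where
  "symmetric_group G lam rho \<longleftrightarrow>
     group G \<and>
     (\<forall>u\<in>carrier G. \<forall>v\<in>carrier G. lam u v \<in> carrier G \<and> rho u v \<in> carrier G) \<and>
     bij_betw (\<lambda>(u,v). (lam u v, rho u v)) (carrier G \<times> carrier G) (carrier G \<times> carrier G) \<and>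
     (\<forall>u\<in>carrier G. \<forall>v\<in>carrier G.
        lam (lam u v) (rho u v) = u \<and> rho (lam u v) (rho u v) = v) \<and>
     (\<forall>a\<in>carrier G. lam a \<one>\<^bsub>G\<^esub> = \<one>\<^bsub>G\<^esub> \<and> lam \<one>\<^bsub>G\<^esub> a = a
                    \<and> rho \<one>\<^bsub>G\<^esub> a = \<one>\<^bsub>G\<^esub> \<and> rho a \<one>\<^bsub>G\<^esub> = a) \<and>
     (\<forall>a\<in>carrier G. \<forall>b\<in>carrier G. \<forall>u\<in>carrier G.
        lam (a \<otimes>\<^bsub>G\<^esub> b) u = lam a (lam b u)) \<and>
     (\<forall>a\<in>carrier G. \<forall>u\<in>carrier G. \<forall>v\<in>carrier G.
        rho a (u \<otimes>\<^bsub>G\<^esub> v) = rho (rho a u) v) \<and>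
     (\<forall>a\<in>carrier G. \<forall>u\<in>carrier G. \<forall>v\<in>carrier G.
        lam a (u \<otimes>\<^bsub>G\<^esub> v) = lam a u \<otimes>\<^bsub>G\<^esub> lam (rho a u) v) \<and>
     (\<forall>a\<in>carrier G. \<forall>b\<in>carrier G. \<forall>u\<in>carrier G.
        rho (a \<otimes>\<^bsub>G\<^esub> b) u = rho a (lam b u) \<otimes>\<^bsub>G\<^esub> rho b u) \<and>
     (\<forall>u\<in>carrier G. \<forall>v\<in>carrier G. u \<otimes>\<^bsub>G\<^esub> v = lam u v \<otimes>\<^bsub>G\<^esub> rho u v)"

definition bplus :: "('a,'b) monoid_scheme \<Rightarrow> ('a \<Rightarrow> 'a \<Rightarrow> 'a) \<Rightarrow> 'a \<Rightarrow> 'a \<Rightarrow> 'a" where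
  "bplus G lam a b = a \<otimes>\<^bsub>G\<^esub> lam (inv\<^bsub>G\<^esub> a) b"

definition add_str :: "('a,'b) monoid_scheme \<Rightarrow> ('a \<Rightarrow> 'a \<Rightarrow> 'a) \<Rightarrow> 'a monoid" where
  "add_str G lam = \<lparr>carrier = carrier G, mult = bplus G lam, one = \<one>\<^bsub>G\<^esub>\<rparr>"

definition bminus :: "('a,'b) monoid_scheme \<Rightarrow> ('a \<Rightarrow> 'a \<Rightarrow> 'a) \<Rightarrow> 'a \<Rightarrow> 'a \<Rightarrow> 'a" where
  "bminus G lam a b = bplus G lam a (inv\<^bsub>add_str G lam\<^esub> b)"

definition bstar :: "('a,'b) monoid_scheme \<Rightarrow> ('a \<Rightarrow> 'a \<Rightarrow> 'a) \<Rightarrow> 'a \<Rightarrow> 'a \<Rightarrow> 'a" where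
  "bstar G lam a b = bminus G lam (bminus G lam (a \<otimes>\<^bsub>G\<^esub> b) a) b"

definition set_star :: "('a,'b) monoid_scheme \<Rightarrow> ('a \<Rightarrow> 'a \<Rightarrow> 'a) \<Rightarrow> 'a set \<Rightarrow> 'a set \<Rightarrow> 'a set" where
  "set_star G lam A B = generate (add_str G lam) {bstar G lam a b | a b. a \<in> A \<and> b \<in> B}"

text \<open>rseries G lam s = G^(s) for s \<ge> 1 (the value at 0 is a junk value, = G).\<close>
fun rseries :: "('a,'b) monoid_scheme \<Rightarrow> ('a \<Rightarrow> 'a \<Rightarrow> 'a) \<Rightarrow> nat \<Rightarrow> 'a set" where
  "rseries G lam 0 = carrier G"
| "rseries G lam (Suc 0) = carrier G"
| "rseries G lam (Suc (Suc n)) = set_star G lam (rseries G lam (Suc n)) (carrier G)"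

fun iter_star :: "('a,'b) monoid_scheme \<Rightarrow> ('a \<Rightarrow> 'a \<Rightarrow> 'a) \<Rightarrow> 'a set \<Rightarrow> nat \<Rightarrow> 'a set" where
  "iter_star G lam X 0 = X"
| "iter_star G lam X (Suc n) = set_star G lam (iter_star G lam X n) (carrier G)"

text \<open>The socle of the quotient symmetric group (G/E), pulled back to G:
  representatives a whose class acts trivially on all classes.\<close>
definition socE :: "('a,'b) monoid_scheme \<Rightarrow> ('a \<Rightarrow> 'a \<Rightarrow> 'a) \<Rightarrow> ('a \<times> 'a) set \<Rightarrow> 'a set" where
  "socE G lam E = {a \<in> carrier G. \<forall>u\<in>carrier G. (lam a u, u) \<in> E}"

definition soc :: "('a,'b) monoid_scheme \<Rightarrow> ('a \<Rightarrow> 'a \<Rightarrow> 'a) \<Rightarrow> 'a set" where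
  "soc G lam = {a \<in> carrier G. \<forall>u\<in>carrier G. lam a u = u}"

text \<open>derE G lam j is the congruence on G whose classes are the elements of G^j:
  G^0 = G, and G^(j+1) = G^j / soc(G^j), with canonical maps the identity on representatives.\<close>
fun derE :: "('a,'b) monoid_scheme \<Rightarrow> ('a \<Rightarrow> 'a \<Rightarrow> 'a) \<Rightarrow> nat \<Rightarrow> ('a \<times> 'a) set" where
  "derE G lam 0 = {(a,b). a \<in> carrier G \<and> b \<in> carrier G \<and> a = b}"
| "derE G lam (Suc j) = {(a,b). a \<in> carrier G \<and> b \<in> carrier G \<and>
                               inv\<^bsub>G\<^esub> a \<otimes>\<^bsub>G\<^esub> b \<in> socE G lam (derE G lam j)}"

text \<open>K_0 = {1}, K_(j+1) = preimage in G of soc(G^j).\<close>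
fun Kchain :: "('a,'b) monoid_scheme \<Rightarrow> ('a \<Rightarrow> 'a \<Rightarrow> 'a) \<Rightarrow> nat \<Rightarrow> 'a set" where
  "Kchain G lam 0 = {\<one>\<^bsub>G\<^esub>}"
| "Kchain G lam (Suc j) = socE G lam (derE G lam j)"

text \<open>retE k: x, y have the same image in the k-fold retraction.\<close>
fun retE :: "'a set \<Rightarrow> ('a \<Rightarrow> 'a \<Rightarrow> 'a) \<Rightarrow> nat \<Rightarrow> ('a \<times> 'a) set" where
  "retE X lam 0 = {(x,y). x \<in> X \<and> y \<in> X \<and> x = y}"
| "retE X lam (Suc k) = {(x,y). x \<in> X \<and> y \<in> X \<and>
                              (\<forall>z\<in>X. (lam x z, lam y z) \<in> retE X lam k)}"

definition mpl_eq :: "'a set \<Rightarrow> ('a \<Rightarrow> 'a \<Rightarrow> 'a) \<Rightarrow> nat \<Rightarrow> bool" where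
  "mpl_eq X lam m \<longleftrightarrow> retE X lam m = X \<times> X \<and> (\<forall>k<m. retE X lam k \<noteq> X \<times> X)"

end

theory Submission imports Defs begin

locale SG =
  fixes G :: "('a,'b) monoid_scheme" (structure) and lam rho :: "'a \<Rightarrow> 'a \<Rightarrow> 'a"
  assumes sg: "symmetric_group G lam rho"
begin

lemma grp: "group G" using sg unfolding symmetric_group_def by blast
sublocale group G by (rule grp)

lemma lam_closed[simp]: "u \<in> carrier G \<Longrightarrow> v \<in> carrier G \<Longrightarrow> lam u v \<in> carrier G"
  using sg unfolding symmetric_group_def by blast
lemma rho_closed[simp]: "u \<in> carrier G \<Longrightarrow> v \<in> carrier G \<Longrightarrow> rho u v \<in> carrier G"
  using sg unfolding symmetric_group_def by blast
lemma invol: "u \<in> carrier G \<Longrightarrow> v \<in> carrier G \<Longrightarrow> lam (lam u v) (rho u v) = u"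
  using sg unfolding symmetric_group_def by blast
lemma lam_one1[simp]: "a \<in> carrier G \<Longrightarrow> lam a \<one> = \<one>"
  using sg unfolding symmetric_group_def by blast
lemma lam_one2[simp]: "a \<in> carrier G \<Longrightarrow> lam \<one> a = a"
  using sg unfolding symmetric_group_def by blast
lemma lam_mult: "a \<in> carrier G \<Longrightarrow> b \<in> carrier G \<Longrightarrow> u \<in> carrier G \<Longrightarrow> lam (a \<otimes> b) u = lam a (lam b u)"
  using sg unfolding symmetric_group_def by blast
lemma lam_dist: "a \<in> carrier G \<Longrightarrow> u \<in> carrier G \<Longrightarrow> v \<in> carrier G \<Longrightarrow> lam a (u \<otimes> v) = lam a u \<otimes> lam (rho a u) v"
  using sg unfolding symmetric_group_def by blast
lemma decomp: "u \<in> carrier G \<Longrightarrow> v \<in> carrier G \<Longrightarrow> u \<otimes> v = lam u v \<otimes> rho u v"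
  using sg unfolding symmetric_group_def by blast

lemma lam_inv_l[simp]: "a \<in> carrier G \<Longrightarrow> u \<in> carrier G \<Longrightarrow> lam (inv a) (lam a u) = u"
  using lam_mult[of "inv a" a u] by simp
lemma lam_inv_r[simp]: "a \<in> carrier G \<Longrightarrow> u \<in> carrier G \<Longrightarrow> lam a (lam (inv a) u) = u"
  using lam_mult[of a "inv a" u] by simp
lemma lam_inj: "a \<in> carrier G \<Longrightarrow> u \<in> carrier G \<Longrightarrow> v \<in> carrier G \<Longrightarrow> lam a u = lam a v \<longleftrightarrow> u = v"
  by (metis lam_inv_l)

abbreviation A where "A \<equiv> add_str G lam"
abbreviation pl (infixl "+." 65) where "a +. b \<equiv> bplus G lam a b"

lemma A_simps[simp]: "carrier A = carrier G" "mult A = bplus G lam" "one A = \<one>"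
  by (simp_all add: add_str_def)

lemma pl_def: "a +. b = a \<otimes> lam (inv a) b" by (simp add: bplus_def)

lemma pl_closed[simp]: "a \<in> carrier G \<Longrightarrow> b \<in> carrier G \<Longrightarrow> a +. b \<in> carrier G"
  by (simp add: pl_def)

lemma pl_comm: assumes a: "a \<in> carrier G" and b: "b \<in> carrier G" shows "a +. b = b +. a"
proof -
  define v where "v = lam (inv a) b"
  have v: "v \<in> carrier G" using a b by (simp add: v_def)
  have lv: "lam a v = b" using a b by (simp add: v_def)
  have "a \<otimes> v = b \<otimes> rho a v" using decomp[OF a v] lv by simp
  moreover have "lam b (rho a v) = a" using invol[OF a v] lv by simp
  hence "lam (inv b) (lam b (rho a v)) = lam (inv b) a" by simp
  hence "rho a v = lam (inv b) a" using b a v by simp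
  ultimately show ?thesis by (simp add: pl_def v_def)
qed

lemma pl_assoc: assumes a: "a \<in> carrier G" and b: "b \<in> carrier G" and c: "c \<in> carrier G"
  shows "(a +. b) +. c = a +. (b +. c)"
proof -
  have ia: "inv a \<in> carrier G" using a by simp
  have e1: "inv a \<otimes> b = lam (inv a) b \<otimes> rho (inv a) b" using decomp[OF ia b] .
  have e2: "inv (a \<otimes> lam (inv a) b) = rho (inv a) b \<otimes> inv b"
  proof -
    have "b = a \<otimes> (lam (inv a) b \<otimes> rho (inv a) b)"
      using e1 a b ia inv_solve_left'[of "lam (inv a) b \<otimes> rho (inv a) b" a b] by simp
    hence "b = a \<otimes> lam (inv a) b \<otimes> rho (inv a) b" using a b ia by (simp add: m_assoc)
    hence "a \<otimes> lam (inv a) b = b \<otimes> inv (rho (inv a) b)"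
      using a b ia inv_solve_right[of "a \<otimes> lam (inv a) b" b "rho (inv a) b"] by simp
    thus ?thesis using a b ia by (simp add: inv_mult_group)
  qed
  have "a +. (b +. c) = a \<otimes> (lam (inv a) b \<otimes> lam (rho (inv a) b) (lam (inv b) c))"
    using a b c by (simp add: pl_def lam_dist)
  also have "\<dots> = a \<otimes> lam (inv a) b \<otimes> lam (rho (inv a) b \<otimes> inv b) c"
    using a b c by (simp add: lam_mult m_assoc)
  also have "\<dots> = (a +. b) +. c" using a b c by (simp add: pl_def e2)
  finally show ?thesis by simp
qed

lemma pl_one_l[simp]: "b \<in> carrier G \<Longrightarrow> \<one> +. b = b" by (simp add: pl_def)
lemma pl_one_r[simp]: "b \<in> carrier G \<Longrightarrow> b +. \<one> = b" by (simp add: pl_def)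
lemma pl_inv: "a \<in> carrier G \<Longrightarrow> lam a (inv a) +. a = \<one>"
proof -
  assume a: "a \<in> carrier G"
  have "lam a (inv a) +. a = a +. lam a (inv a)" using a by (simp add: pl_comm)
  also have "\<dots> = \<one>" using a by (simp add: pl_def)
  finally show ?thesis .
qed

lemma A_comm: "comm_group A"
  apply (rule comm_groupI)
  apply (simp_all add: pl_assoc)
  apply (rule pl_comm, assumption+)
  apply (rule bexI[where x="lam x (inv x)" for x])
  apply (erule pl_inv)
  by simp

sublocale Ag: comm_group A by (rule A_comm)

abbreviation neg where "neg a \<equiv> inv\<^bsub>A\<^esub> a"

lemma neg_eq: "a \<in> carrier G \<Longrightarrow> neg a = lam a (inv a)"
  by (rule Ag.inv_equality) (auto simp: pl_inv)

lemma neg_closed[simp]: "a \<in> carrier G \<Longrightarrow> neg a \<in> carrier G"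
  using Ag.inv_closed by simp

lemma lam_pl: assumes a: "a \<in> carrier G" and b: "b \<in> carrier G" and c: "c \<in> carrier G"
  shows "lam a (b +. c) = lam a b +. lam a c"
proof -
  have e: "rho a b \<otimes> inv b = inv (lam a b) \<otimes> a"
  proof -
    have "inv (lam a b) \<otimes> (a \<otimes> b) = rho a b"
      using decomp[OF a b] a b by (simp add: m_assoc[symmetric])
    hence "inv (lam a b) \<otimes> a \<otimes> b = rho a b" using a b by (simp add: m_assoc)
    thus ?thesis using a b inv_solve_right'[of "inv (lam a b) \<otimes> a" "rho a b" b] by simp
  qed
  have "lam a (b +. c) = lam a b \<otimes> lam (rho a b \<otimes> inv b) c"
    using a b c by (simp add: pl_def lam_dist lam_mult)
  also have "\<dots> = lam a b +. lam a c" using a b c by (simp add: e pl_def lam_mult)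
  finally show ?thesis .
qed

lemma lam_neg: "a \<in> carrier G \<Longrightarrow> b \<in> carrier G \<Longrightarrow> lam a (neg b) = neg (lam a b)"
proof -
  assume a: "a \<in> carrier G" and b: "b \<in> carrier G"
  have "lam a (neg b) +. lam a b = lam a (neg b +. b)" using a b by (simp add: lam_pl)
  also have "neg b +. b = \<one>" using b Ag.l_inv[of b] by simp
  finally have "lam a (neg b) +. lam a b = \<one>" using a by simp
  thus ?thesis using a b by (intro Ag.inv_equality[symmetric]) simp_all
qed

lemma mult_pl: "a \<in> carrier G \<Longrightarrow> b \<in> carrier G \<Longrightarrow> a \<otimes> b = a +. lam a b"
  by (simp add: pl_def)

lemma pl_lcomm: "a \<in> carrier G \<Longrightarrow> b \<in> carrier G \<Longrightarrow> c \<in> carrier G \<Longrightarrow> a +. (b +. c) = b +. (a +. c)"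
proof -
  assume a: "a \<in> carrier G" and b: "b \<in> carrier G" and c: "c \<in> carrier G"
  have "a +. (b +. c) = (a +. b) +. c" using a b c by (simp add: pl_assoc)
  also have "\<dots> = (b +. a) +. c" using a b by (simp add: pl_comm)
  also have "\<dots> = b +. (a +. c)" using a b c by (simp add: pl_assoc)
  finally show ?thesis .
qed
lemmas pl_ac = pl_assoc pl_comm pl_lcomm
lemma pl_neg_r[simp]: "a \<in> carrier G \<Longrightarrow> a +. neg a = \<one>" using Ag.r_inv[of a] by simp
lemma pl_neg_l[simp]: "a \<in> carrier G \<Longrightarrow> neg a +. a = \<one>" using Ag.l_inv[of a] by simp
lemma pl_neg_r2[simp]: "a \<in> carrier G \<Longrightarrow> b \<in> carrier G \<Longrightarrow> a +. (neg a +. b) = b"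
  by (simp add: pl_assoc[symmetric])
lemma pl_neg_l2[simp]: "a \<in> carrier G \<Longrightarrow> b \<in> carrier G \<Longrightarrow> neg a +. (a +. b) = b"
  by (simp add: pl_assoc[symmetric])
lemma neg_neg[simp]: "a \<in> carrier G \<Longrightarrow> neg (neg a) = a" using Ag.inv_inv[of a] by simp
lemma neg_pl: "a \<in> carrier G \<Longrightarrow> b \<in> carrier G \<Longrightarrow> neg (a +. b) = neg a +. neg b"
  using Ag.inv_mult[of a b] by simp
lemma neg_one[simp]: "neg \<one> = \<one>" using Ag.inv_one by simp

lemma pl_telescope: "p \<in> carrier G \<Longrightarrow> q \<in> carrier G \<Longrightarrow> r \<in> carrier G \<Longrightarrow> (p +. neg q) +. (q +. r) = p +. r"
  by (simp add: pl_assoc)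
lemma pl_cancel_r: "a \<in> carrier G \<Longrightarrow> b \<in> carrier G \<Longrightarrow> (a +. b) +. neg a = b"
  by (simp add: pl_comm[of a] pl_assoc)

lemma bstar_eq: assumes a: "a \<in> carrier G" and b: "b \<in> carrier G"
  shows "bstar G lam a b = lam a b +. neg b"
proof -
  have "bstar G lam a b = ((a +. lam a b) +. neg a) +. neg b"
    using a b by (simp add: bstar_def bminus_def mult_pl add_str_def)
  also have "(a +. lam a b) +. neg a = lam a b" using a b by (simp add: pl_comm[of a] pl_assoc)
  finally show ?thesis .
qed

definition is_ideal where
  "is_ideal K \<longleftrightarrow> subgroup K G \<and> (\<forall>x\<in>carrier G. \<forall>k\<in>K. x \<otimes> k \<otimes> inv x \<in> K)
     \<and> (\<forall>x\<in>carrier G. \<forall>k\<in>K. lam x k \<in> K)"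

definition LL where "LL K = {a \<in> carrier G. \<forall>u\<in>carrier G. lam a u +. neg u \<in> K}"

end

locale SGI = SG + fixes K assumes idl: "is_ideal K"
begin
lemma idl_parts: "subgroup K G \<and> (\<forall>x\<in>carrier G. \<forall>k\<in>K. x \<otimes> k \<otimes> inv x \<in> K)
     \<and> (\<forall>x\<in>carrier G. \<forall>k\<in>K. lam x k \<in> K)" using idl unfolding is_ideal_def .
lemma sgK: "subgroup K G" using idl_parts by (rule conjunct1)
lemma K_carr[simp]: "k \<in> K \<Longrightarrow> k \<in> carrier G" by (rule subgroup.mem_carrier[OF sgK])
lemma K_one[simp]: "\<one> \<in> K" by (rule subgroup.one_closed[OF sgK])
lemma K_mult: "a \<in> K \<Longrightarrow> b \<in> K \<Longrightarrow> a \<otimes> b \<in> K" by (rule subgroup.m_closed[OF sgK])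
lemma K_inv: "a \<in> K \<Longrightarrow> inv a \<in> K" by (rule subgroup.m_inv_closed[OF sgK])
lemma K_norm: "x \<in> carrier G \<Longrightarrow> k \<in> K \<Longrightarrow> x \<otimes> k \<otimes> inv x \<in> K"
  using conjunct1[OF conjunct2[OF idl_parts]] by blast
lemma K_lam: "x \<in> carrier G \<Longrightarrow> k \<in> K \<Longrightarrow> lam x k \<in> K"
  using conjunct2[OF conjunct2[OF idl_parts]] by blast
lemma K_lam_iff: "x \<in> carrier G \<Longrightarrow> v \<in> carrier G \<Longrightarrow> lam x v \<in> K \<longleftrightarrow> v \<in> K"
proof -
  assume x: "x \<in> carrier G" and v: "v \<in> carrier G"
  show ?thesis
  proof
    assume "lam x v \<in> K" then have "lam (inv x) (lam x v) \<in> K" using x by (simp add: K_lam)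
    thus "v \<in> K" using x v by simp
  qed (simp add: x K_lam)
qed
lemma K_pl: "a \<in> K \<Longrightarrow> b \<in> K \<Longrightarrow> a +. b \<in> K"
  by (simp add: pl_def K_mult K_lam)
lemma K_neg: "a \<in> K \<Longrightarrow> neg a \<in> K"
  by (simp add: neg_eq K_lam K_inv)
lemma K_neg_iff: "a \<in> carrier G \<Longrightarrow> neg a \<in> K \<longleftrightarrow> a \<in> K"
  using K_neg[of "neg a"] K_neg[of a] by auto

lemma K_equiv: assumes x: "x \<in> carrier G" and y: "y \<in> carrier G"
  shows "inv x \<otimes> y \<in> K \<longleftrightarrow> x +. neg y \<in> K"
proof
  assume h: "inv x \<otimes> y \<in> K"
  define k where "k = inv x \<otimes> y"
  have k: "k \<in> K" using h k_def by simp
  have "y = x \<otimes> k" using x y by (simp add: k_def m_assoc[symmetric])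
  hence "y = x +. lam x k" using x k by (simp add: mult_pl)
  hence "x +. neg y = neg (lam x k)" using x k by (simp add: neg_pl)
  thus "x +. neg y \<in> K" using x k by (simp add: K_neg K_lam)
next
  assume h: "x +. neg y \<in> K"
  define k where "k = neg (x +. neg y)"
  have k: "k \<in> K" using h k_def K_neg by simp
  have "y = x +. k" using x y by (simp add: k_def neg_pl)
  hence "inv x \<otimes> y = lam (inv x) k" using x k by (simp add: pl_def m_assoc[symmetric])
  thus "inv x \<otimes> y \<in> K" using x k by (simp add: K_lam)
qed

lemma K_sub_LL: "K \<subseteq> LL K"
proof
  fix k assume k: "k \<in> K"
  have "\<forall>u\<in>carrier G. lam k u +. neg u \<in> K"
  proof
    fix u assume u: "u \<in> carrier G"
    define k' where "k' = inv u \<otimes> k \<otimes> u"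
    have k': "k' \<in> K" using K_norm[of "inv u" k] u k by (simp add: k'_def)
    have "k \<otimes> u = u \<otimes> k'" using u k by (simp add: k'_def m_assoc[symmetric])
    hence "k +. lam k u = u +. lam u k'" using u k k' by (simp add: mult_pl)
    hence "neg k +. (k +. lam k u) = neg k +. (u +. lam u k')" by simp
    hence "lam k u = neg k +. (u +. lam u k')" using u k k' by simp
    also have "neg k +. (u +. lam u k') = u +. (neg k +. lam u k')" using u k k' by (simp add: pl_lcomm)
    finally have "lam k u +. neg u = (u +. (neg k +. lam u k')) +. neg u" by simp
    hence "lam k u +. neg u = neg k +. lam u k'" using u k k' by (simp add: pl_cancel_r)
    thus "lam k u +. neg u \<in> K" using u k k' by (simp add: K_pl K_neg K_lam)
  qed
  thus "k \<in> LL K" using k by (simp add: LL_def)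
qed

lemma LL_carr: "a \<in> LL K \<Longrightarrow> a \<in> carrier G" by (simp add: LL_def)

lemma LL_mult: assumes a: "a \<in> LL K" and b: "b \<in> LL K" shows "a \<otimes> b \<in> LL K"
proof -
  have ag: "a \<in> carrier G" and bg: "b \<in> carrier G" using a b by (simp_all add: LL_def)
  have "\<forall>u\<in>carrier G. lam (a \<otimes> b) u +. neg u \<in> K"
  proof
    fix u assume u: "u \<in> carrier G"
    have "lam (a \<otimes> b) u +. neg u = lam a (lam b u +. neg u) +. (lam a u +. neg u)"
      using ag bg u by (simp add: lam_mult lam_pl lam_neg pl_telescope)
    moreover have "lam b u +. neg u \<in> K" "lam a u +. neg u \<in> K" using a b u by (simp_all add: LL_def)
    ultimately show "lam (a \<otimes> b) u +. neg u \<in> K" using ag u by (simp add: K_pl K_lam)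
  qed
  thus ?thesis using ag bg by (simp add: LL_def)
qed

lemma LL_inv: assumes a: "a \<in> LL K" shows "inv a \<in> LL K"
proof -
  have ag: "a \<in> carrier G" using a by (simp add: LL_def)
  have "\<forall>u\<in>carrier G. lam (inv a) u +. neg u \<in> K"
  proof
    fix u assume u: "u \<in> carrier G"
    define w where "w = lam (inv a) u"
    have w: "w \<in> carrier G" using ag u by (simp add: w_def)
    have "lam a w +. neg w \<in> K" using a w by (simp add: LL_def)
    hence "u +. neg w \<in> K" using ag u by (simp add: w_def)
    hence "neg (u +. neg w) \<in> K" by (rule K_neg)
    thus "lam (inv a) u +. neg u \<in> K" using u w by (simp add: neg_pl w_def pl_comm)
  qed
  thus ?thesis using ag by (simp add: LL_def)
qed

lemma LL_norm: assumes x: "x \<in> carrier G" and a: "a \<in> LL K" shows "x \<otimes> a \<otimes> inv x \<in> LL K"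
proof -
  have ag: "a \<in> carrier G" using a by (simp add: LL_def)
  have "\<forall>u\<in>carrier G. lam (x \<otimes> a \<otimes> inv x) u +. neg u \<in> K"
  proof
    fix u assume u: "u \<in> carrier G"
    define w where "w = lam (inv x) u"
    have w: "w \<in> carrier G" using x u by (simp add: w_def)
    have "lam (x \<otimes> a \<otimes> inv x) u +. neg u = lam x (lam a w +. neg w)"
      using x ag u w by (simp add: lam_mult lam_pl lam_neg w_def)
    moreover have "lam a w +. neg w \<in> K" using a w by (simp add: LL_def)
    ultimately show "lam (x \<otimes> a \<otimes> inv x) u +. neg u \<in> K" using x ag w by (simp add: K_lam)
  qed
  thus ?thesis using ag x by (simp add: LL_def)
qed

lemma LL_lam: assumes x: "x \<in> carrier G" and a: "a \<in> LL K" shows "lam x a \<in> LL K"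
proof -
  have ag: "a \<in> carrier G" using a by (simp add: LL_def)
  define y where "y = x \<otimes> a \<otimes> inv x"
  have yL: "y \<in> LL K" using LL_norm[OF x a] y_def by simp
  have y: "y \<in> carrier G" using x ag by (simp add: y_def)
  have "y \<otimes> x = x \<otimes> a" using x ag by (simp add: y_def m_assoc)
  hence "y +. lam y x = x +. lam x a" using x ag y by (simp add: mult_pl)
  hence "neg x +. (x +. lam x a) = neg x +. (y +. lam y x)" by simp
  hence "lam x a = neg x +. (y +. lam y x)" using x ag y by simp
  hence e: "lam x a = y +. (lam y x +. neg x)" using x ag y by (simp add: pl_ac)
  have k: "lam y x +. neg x \<in> K" using yL x by (simp add: LL_def)
  have "lam x a = y \<otimes> lam (inv y) (lam y x +. neg x)" using e by (simp add: pl_def)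
  moreover have "lam (inv y) (lam y x +. neg x) \<in> LL K" using k y K_lam K_sub_LL by blast
  ultimately show ?thesis using yL LL_mult by simp
qed

lemma LL_ideal: "is_ideal (LL K)"
proof -
  have "subgroup (LL K) G"
    apply (rule subgroupI)
    using LL_carr apply blast
    using K_sub_LL K_one apply blast
    using LL_inv apply blast
    using LL_mult by blast
  thus ?thesis using LL_norm LL_lam unfolding is_ideal_def by blast
qed
end

context SG begin

lemma mkSGI: "is_ideal K \<Longrightarrow> SGI G lam rho K"
  by (simp add: SGI_def SGI_axioms_def SG_axioms)

abbreviation KK where "KK j \<equiv> Kchain G lam j"

lemma derE_eq: "derE G lam j = {(a,b). a \<in> carrier G \<and> b \<in> carrier G \<and> inv a \<otimes> b \<in> KK j}"
proof (cases j)
  case 0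
  have "\<And>a b. a \<in> carrier G \<Longrightarrow> b \<in> carrier G \<Longrightarrow> (inv a \<otimes> b = \<one>) = (a = b)"
    using inv_solve_left' by fastforce
  then show ?thesis using 0 by auto
qed simp

lemma KK_Suc: assumes "is_ideal (KK j)" shows "KK (Suc j) = LL (KK j)"
proof -
  interpret I: SGI G lam rho "KK j" by (rule mkSGI[OF assms])
  show ?thesis
    by (auto simp: LL_def socE_def derE_eq I.K_equiv)
qed

declare Kchain.simps(2)[simp del] derE.simps(2)[simp del]

lemma KK_ideal: "is_ideal (KK j)"
proof (induction j)
  case 0
  show ?case unfolding is_ideal_def using triv_subgroup by simp
next
  case (Suc j)
  interpret I: SGI G lam rho "KK j" by (rule mkSGI[OF Suc])
  show ?case using KK_Suc[OF Suc] I.LL_ideal by simp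
qed

lemma KK_Suc': "KK (Suc j) = LL (KK j)" by (rule KK_Suc[OF KK_ideal])

lemma KK_sub: "KK j \<subseteq> carrier G"
  using SGI.K_carr[OF mkSGI[OF KK_ideal]] by blast

lemma KK_mono1: "KK j \<subseteq> KK (Suc j)"
  using SGI.K_sub_LL[OF mkSGI[OF KK_ideal]] KK_Suc' by simp

lemma KK_mono: "i \<le> j \<Longrightarrow> KK i \<subseteq> KK j"
  by (induction j rule: dec_induct) (use KK_mono1 in blast)+

lemma KK_stab: assumes "KK i = KK (Suc i)" shows "KK (i + t) = KK i"
proof (induction t)
  case (Suc t)
  have "KK (Suc (i + t)) = LL (KK (i + t))" by (rule KK_Suc')
  also have "\<dots> = LL (KK i)" using Suc by simp
  also have "\<dots> = KK i" using KK_Suc'[of i] assms by simp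
  finally show ?case by simp
qed simp

lemma KK_Suc_bstar: "a \<in> KK (Suc i) \<longleftrightarrow> a \<in> carrier G \<and> (\<forall>b\<in>carrier G. bstar G lam a b \<in> KK i)"
  by (auto simp: KK_Suc' LL_def bstar_eq)

lemma KK0: "KK 0 = {\<one>}" by simp

lemma retE_eq: "retE (carrier G) lam k = derE G lam k"
proof (induction k)
  case (Suc k)
  interpret I: SGI G lam rho "KK k" by (rule mkSGI[OF KK_ideal])
  have step: "(\<forall>z\<in>carrier G. inv (lam x z) \<otimes> lam y z \<in> KK k) \<longleftrightarrow> inv x \<otimes> y \<in> LL (KK k)"
    if x: "x \<in> carrier G" and y: "y \<in> carrier G" for x y
  proof -
    have "inv (lam x z) \<otimes> lam y z \<in> KK k \<longleftrightarrow> lam (inv x \<otimes> y) z +. neg z \<in> KK k"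
      if z: "z \<in> carrier G" for z
    proof -
      have "inv (lam x z) \<otimes> lam y z \<in> KK k \<longleftrightarrow> lam x z +. neg (lam y z) \<in> KK k"
        using x y z by (simp add: I.K_equiv)
      also have "\<dots> \<longleftrightarrow> neg (lam x z +. neg (lam y z)) \<in> KK k"
        using x y z by (simp add: I.K_neg_iff)
      also have "neg (lam x z +. neg (lam y z)) = lam y z +. neg (lam x z)"
        using x y z by (simp add: neg_pl pl_comm)
      also have "\<dots> = lam x (lam (inv x \<otimes> y) z +. neg z)"
        using x y z by (simp add: lam_pl lam_neg lam_mult)
      also have "\<dots> \<in> KK k \<longleftrightarrow> lam (inv x \<otimes> y) z +. neg z \<in> KK k"
        using x y z by (simp add: I.K_lam_iff)
      finally show ?thesis .
    qed
    thus ?thesis using x y by (auto simp: LL_def)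
  qed
  show ?case using Suc step by (auto simp: derE_eq KK_Suc')
qed (simp add: derE_eq)

lemma rel_full: assumes "K \<subseteq> carrier G"
  shows "{(a,b). a \<in> carrier G \<and> b \<in> carrier G \<and> inv a \<otimes> b \<in> K} = carrier G \<times> carrier G \<longleftrightarrow> K = carrier G"
proof
  assume h: "{(a,b). a \<in> carrier G \<and> b \<in> carrier G \<and> inv a \<otimes> b \<in> K} = carrier G \<times> carrier G"
  have "carrier G \<subseteq> K"
  proof
    fix a assume a: "a \<in> carrier G"
    hence "(\<one>, a) \<in> carrier G \<times> carrier G" by simp
    hence "inv \<one> \<otimes> a \<in> K" using h by blast
    thus "a \<in> K" using a by simp
  qed
  thus "K = carrier G" using assms by blast
qed auto

lemma retE_full: "retE (carrier G) lam k = carrier G \<times> carrier G \<longleftrightarrow> KK k = carrier G"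
  using rel_full[OF KK_sub[of k]] by (simp add: retE_eq derE_eq)

lemma mpl_char: "mpl_eq (carrier G) lam m \<longleftrightarrow> KK m = carrier G \<and> (\<forall>k<m. KK k \<noteq> carrier G)"
  by (simp add: mpl_eq_def retE_full)

lemma B_char: "((\<forall>i<m. KK i \<subset> KK (Suc i)) \<and> KK m = carrier G) \<longleftrightarrow> KK m = carrier G \<and> (\<forall>k<m. KK k \<noteq> carrier G)"
proof
  assume h: "(\<forall>i<m. KK i \<subset> KK (Suc i)) \<and> KK m = carrier G"
  have "KK k \<noteq> carrier G" if k: "k < m" for k
  proof -
    have "KK k \<subset> KK (Suc k)" using h k by blast
    moreover have "KK (Suc k) \<subseteq> KK m" using k KK_mono by simp
    ultimately show ?thesis using h by blast
  qed
  thus "KK m = carrier G \<and> (\<forall>k<m. KK k \<noteq> carrier G)" using h by blast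
next
  assume h: "KK m = carrier G \<and> (\<forall>k<m. KK k \<noteq> carrier G)"
  have "KK i \<subset> KK (Suc i)" if i: "i < m" for i
  proof -
    have "KK i \<noteq> KK (Suc i)"
    proof
      assume "KK i = KK (Suc i)"
      hence "KK (i + (m - i)) = KK i" by (rule KK_stab)
      moreover have "i + (m - i) = m" using i by simp
      ultimately have "KK m = KK i" by simp
      thus False using h i by blast
    qed
    thus ?thesis using KK_mono1 by blast
  qed
  thus "(\<forall>i<m. KK i \<subset> KK (Suc i)) \<and> KK m = carrier G" using h by blast
qed

lemma bstar_closed: "a \<in> carrier G \<Longrightarrow> b \<in> carrier G \<Longrightarrow> bstar G lam a b \<in> carrier G"
  by (simp add: bstar_eq)

lemma set_star_carr: assumes "X \<subseteq> carrier G" shows "set_star G lam X (carrier G) \<subseteq> carrier G"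
proof -
  have "{bstar G lam a b |a b. a \<in> X \<and> b \<in> carrier G} \<subseteq> carrier A"
    using assms bstar_closed by auto
  thus ?thesis unfolding set_star_def using Ag.generate_incl by simp
qed

lemma set_star_one: "\<one> \<in> set_star G lam X Y"
  unfolding set_star_def using generate.one[of A] by simp

lemma set_star_incl: "a \<in> X \<Longrightarrow> b \<in> Y \<Longrightarrow> bstar G lam a b \<in> set_star G lam X Y"
  unfolding set_star_def by (rule generate.incl) blast

lemma KK_addsub: "subgroup (KK i) A"
proof -
  interpret I: SGI G lam rho "KK i" by (rule mkSGI[OF KK_ideal])
  show ?thesis
    apply (rule Ag.subgroupI)
    using I.K_carr apply auto[1]
    using I.K_one apply blast
    using I.K_neg apply blast
    using I.K_pl by simp
qed

lemma set_star_sub: assumes "X \<subseteq> KK (Suc i)" shows "set_star G lam X (carrier G) \<subseteq> KK i"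
proof -
  have "{bstar G lam a b |a b. a \<in> X \<and> b \<in> carrier G} \<subseteq> KK i"
    using assms KK_Suc_bstar by blast
  thus ?thesis unfolding set_star_def using Ag.generate_subgroup_incl KK_addsub by blast
qed

abbreviation RR where "RR n \<equiv> rseries G lam n"

lemma RR_Suc: "1 \<le> n \<Longrightarrow> RR (Suc n) = set_star G lam (RR n) (carrier G)"
  by (cases n) auto

lemma RR_carr: "RR n \<subseteq> carrier G"
proof (induction n rule: nat_less_induct)
  case (1 n)
  show ?case
  proof (cases n)
    case (Suc k)
    show ?thesis
    proof (cases k)
      case (Suc l) thus ?thesis using 1 \<open>n = Suc k\<close> set_star_carr by simp
    qed (simp add: Suc)
  qed simp
qed

lemma RR_one: "\<one> \<in> RR n"
proof (cases n)
  case (Suc k) thus ?thesis by (cases k) (simp_all add: set_star_one)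
qed simp

lemma iter_sub: "s \<le> j \<Longrightarrow> iter_star G lam (KK j) s \<subseteq> KK (j - s)"
proof (induction s)
  case (Suc s)
  have "iter_star G lam (KK j) s \<subseteq> KK (Suc (j - Suc s))" using Suc by (simp add: Suc_diff_Suc)
  thus ?case by (simp add: set_star_sub)
qed simp

lemma D1: "RR (j + 1) \<subseteq> KK i \<Longrightarrow> t \<le> i \<Longrightarrow> RR (j + 1 + t) \<subseteq> KK (i - t)"
proof (induction t)
  case (Suc t)
  have "RR (j + 1 + t) \<subseteq> KK (Suc (i - Suc t))" using Suc by (simp add: Suc_diff_Suc)
  hence "set_star G lam (RR (j + 1 + t)) (carrier G) \<subseteq> KK (i - Suc t)" by (rule set_star_sub)
  thus ?case using RR_Suc[of "j + 1 + t"] by simp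
qed simp

lemma D2: assumes "RR (n + 1) \<subseteq> KK 0" shows "d \<le> n \<Longrightarrow> RR (n - d + 1) \<subseteq> KK d"
proof (induction d)
  case 0 thus ?case using assms by simp
next
  case (Suc d)
  have sub: "RR (n - d + 1) \<subseteq> KK d" using Suc by simp
  have e: "RR (n - d + 1) = set_star G lam (RR (n - Suc d + 1)) (carrier G)"
    using Suc RR_Suc[of "n - Suc d + 1"] by (simp add: Suc_diff_Suc)
  show ?case
  proof
    fix a assume a: "a \<in> RR (n - Suc d + 1)"
    have "\<forall>b\<in>carrier G. bstar G lam a b \<in> KK d"
      using set_star_incl[OF a] e sub by blast
    moreover have "a \<in> carrier G" using a RR_carr by blast
    ultimately show "a \<in> KK (Suc d)" by (simp add: KK_Suc_bstar)
  qed
qed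

end

theorem mainTheorem6:
  fixes G :: "('a,'b) monoid_scheme" and lam rho :: "'a \<Rightarrow> 'a \<Rightarrow> 'a"
  assumes "symmetric_group G lam rho"
    and "\<exists>a\<in>carrier G. \<exists>b\<in>carrier G. a \<noteq> b"
  shows "(\<forall>j s. 1 \<le> s \<and> s \<le> j \<longrightarrow>
            iter_star G lam (Kchain G lam j) s \<subseteq> Kchain G lam (j - s))
       \<and> (\<forall>m::nat. 1 \<le> m \<longrightarrow>
            (mpl_eq (carrier G) lam m
               \<longleftrightarrow> (\<forall>i<m. Kchain G lam i \<subset> Kchain G lam (Suc i)) \<and> Kchain G lam m = carrier G)
          \<and> ((\<forall>i<m. Kchain G lam i \<subset> Kchain G lam (Suc i)) \<and> Kchain G lam m = carrier G
               \<longleftrightarrow> (\<forall>j\<le>m. rseries G lam (j + 1) \<subseteq> Kchain G lam (m - j))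
                   \<and> (\<forall>j<m. \<not> rseries G lam (j + 1) \<subseteq> Kchain G lam (m - j - 1)))
          \<and> ((\<forall>j\<le>m. rseries G lam (j + 1) \<subseteq> Kchain G lam (m - j))
                   \<and> (\<forall>j<m. \<not> rseries G lam (j + 1) \<subseteq> Kchain G lam (m - j - 1))
               \<longleftrightarrow> rseries G lam (m + 1) = {\<one>\<^bsub>G\<^esub>} \<and> rseries G lam m \<noteq> {\<one>\<^bsub>G\<^esub>}))"
proof -
  interpret SG G lam rho using assms(1) by (simp add: SG_def)
  have RR1: "rseries G lam 1 = carrier G" by simp
  have P1: "\<forall>j s. 1 \<le> s \<and> s \<le> j \<longrightarrow> iter_star G lam (KK j) s \<subseteq> KK (j - s)"
    using iter_sub by simp
  have P2: "(mpl_eq (carrier G) lam m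
               \<longleftrightarrow> (\<forall>i<m. KK i \<subset> KK (Suc i)) \<and> KK m = carrier G)
          \<and> ((\<forall>i<m. KK i \<subset> KK (Suc i)) \<and> KK m = carrier G
               \<longleftrightarrow> (\<forall>j\<le>m. RR (j + 1) \<subseteq> KK (m - j))
                   \<and> (\<forall>j<m. \<not> RR (j + 1) \<subseteq> KK (m - j - 1)))
          \<and> ((\<forall>j\<le>m. RR (j + 1) \<subseteq> KK (m - j))
                   \<and> (\<forall>j<m. \<not> RR (j + 1) \<subseteq> KK (m - j - 1))
               \<longleftrightarrow> RR (m + 1) = {\<one>\<^bsub>G\<^esub>} \<and> RR m \<noteq> {\<one>\<^bsub>G\<^esub>})" if m1: "1 \<le> m" for m
  proof -
    let ?B = "(\<forall>i<m. KK i \<subset> KK (Suc i)) \<and> KK m = carrier G"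
    let ?C = "(\<forall>j\<le>m. RR (j + 1) \<subseteq> KK (m - j)) \<and> (\<forall>j<m. \<not> RR (j + 1) \<subseteq> KK (m - j - 1))"
    let ?D = "RR (m + 1) = {\<one>\<^bsub>G\<^esub>} \<and> RR m \<noteq> {\<one>\<^bsub>G\<^esub>}"
    have AB: "mpl_eq (carrier G) lam m \<longleftrightarrow> ?B" by (simp only: mpl_char B_char)
    have BC: "?B \<longleftrightarrow> ?C"
    proof
      assume B: ?B
      have C1: "RR (j + 1) \<subseteq> KK (m - j)" if j: "j \<le> m" for j
        using D1[of 0 m j] B j by simp
      have C2: "\<not> RR (j + 1) \<subseteq> KK (m - j - 1)" if j: "j < m" for j
      proof
        assume h: "RR (j + 1) \<subseteq> KK (m - j - 1)"
        have "RR (j + 1 + (m - j - 1)) \<subseteq> KK (m - j - 1 - (m - j - 1))" by (rule D1[OF h]) simp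
        moreover have "j + 1 + (m - j - 1) = (m - 1) + 1" using j by simp
        ultimately have "RR ((m - 1) + 1) \<subseteq> KK 0" by simp
        from D2[OF this, of "m - 1"] have "RR (0 + 1) \<subseteq> KK (m - 1)" by simp
        hence "KK (m - 1) = carrier G" using KK_sub by auto
        moreover have "m - 1 < m" using m1 by simp
        hence "KK (m - 1) \<subset> KK (Suc (m - 1))" using B by blast
        moreover have "Suc (m - 1) = m" using m1 by simp
        ultimately show False using B by auto
      qed
      show ?C using C1 C2 by blast
    next
      assume C: ?C
      have "RR (0 + 1) \<subseteq> KK (m - 0)" using C by blast
      hence "KK m = carrier G" using KK_sub[of m] by auto
      moreover have "KK k \<noteq> carrier G" if k: "k < m" for k
      proof
        assume h: "KK k = carrier G"
        have "RR (m - 1 - k + 1) \<subseteq> KK k" using RR_carr h by simp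
        moreover have "m - 1 - k < m" using k by simp
        hence "\<not> RR (m - 1 - k + 1) \<subseteq> KK (m - (m - 1 - k) - 1)" using C by blast
        moreover have "m - (m - 1 - k) - 1 = k" using k by simp
        ultimately show False by simp
      qed
      ultimately show ?B unfolding B_char by blast
    qed
    have CD: "?C \<longleftrightarrow> ?D"
    proof
      assume C: ?C
      have "RR (m + 1) \<subseteq> KK (m - m)" using C by blast
      hence "RR (m + 1) \<subseteq> {\<one>\<^bsub>G\<^esub>}" by simp
      hence "RR (m + 1) = {\<one>\<^bsub>G\<^esub>}" using RR_one by blast
      moreover have "m - 1 < m" using m1 by simp
      hence "\<not> RR (m - 1 + 1) \<subseteq> KK (m - (m - 1) - 1)" using C by blast
      hence "\<not> RR m \<subseteq> {\<one>\<^bsub>G\<^esub>}" using m1 by simp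
      ultimately show ?D by blast
    next
      assume D: ?D
      have C1: "RR (j + 1) \<subseteq> KK (m - j)" if j: "j \<le> m" for j
      proof -
        have "RR (m + 1) \<subseteq> KK 0" using D by simp
        from D2[OF this, of "m - j"] j show ?thesis by simp
      qed
      have C2: "\<not> RR (j + 1) \<subseteq> KK (m - j - 1)" if j: "j < m" for j
      proof
        assume h: "RR (j + 1) \<subseteq> KK (m - j - 1)"
        have "RR (j + 1 + (m - j - 1)) \<subseteq> KK (m - j - 1 - (m - j - 1))" by (rule D1[OF h]) simp
        moreover have "j + 1 + (m - j - 1) = m" using j by simp
        ultimately have "RR m \<subseteq> {\<one>\<^bsub>G\<^esub>}" by simp
        thus False using D RR_one by blast
      qed
      show ?C using C1 C2 by blast
    qed
    show ?thesis by (intro conjI AB BC CD)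
  qed
  show ?thesis
    apply (rule conjI)
     apply (rule P1)
    apply (intro allI impI)
    by (rule P2)
qed

end
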